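(* Let $\mathcal{P}=\mathbb{Z}_N=\langle\theta\rangle$ and let $\mathcal{O}\subseteq\mathcal{P}^2$ be a minimally closed set of boundary conditions under the action of $\mathrm{SL}(2,\mathbb{Z})$. Then for every $x\in\mathcal{O}$ there exist $m\in\mathbb{Z}$ and $V\in\mathrm{SL}(2,\mathbb{Z})$ such that $x\ast V=(1,\theta^m)\in\mathcal{O}$.
   Context: Boundary conditions are elements of $\mathcal{P}^2=\mathcal{P}\times\mathcal{P}$. The right action of $V=\begin{pmatrix} a&b\\c&d\end{pmatrix}\in\mathrm{SL}(2,\mathbb{Z})$ is $(g,h)\ast V=(g^ah^{-c},g^{-b}h^d)$. A subset is closed if it is mapped into itself by every $V\in\mathrm{SL}(2,\mathbb{Z})$; a closed set is minimally closed if it is nonempty and contains no nonempty proper closed subset. *)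

theory Defs
  imports Main
begin

text \<open>The cyclic group P = Z_N is modelled additively as the residues {0..<N} (N > 0),
  with group law addition mod N. A generator theta is a residue coprime to N;
  theta^m is then (m * theta) mod N and the identity 1 of P is 0.\<close>

definition P :: "int \<Rightarrow> int set" where
  "P N = {0..<N}"

definition P2 :: "int \<Rightarrow> (int \<times> int) set" where
  "P2 N = P N \<times> P N"

text \<open>SL(2,Z): a matrix (a b; c d) is encoded as the tuple (a,b,c,d).\<close>
definition SL2 :: "(int \<times> int \<times> int \<times> int) set" where
  "SL2 = {(a,b,c,d). a*d - b*c = 1}"

text \<open>Right action (g,h) * V = (g^a h^(-c), g^(-b) h^d), written additively mod N.\<close>
fun act :: "int \<Rightarrow> int \<times> int \<Rightarrow> int \<times> int \<times> int \<times> int \<Rightarrow> int \<times> int" where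
  "act N (g,h) (a,b,c,d) = ((a*g - c*h) mod N, (d*h - b*g) mod N)"

definition closed_bc :: "int \<Rightarrow> (int \<times> int) set \<Rightarrow> bool" where
  "closed_bc N S \<longleftrightarrow> S \<subseteq> P2 N \<and> (\<forall>x\<in>S. \<forall>V\<in>SL2. act N x V \<in> S)"

definition minimally_closed :: "int \<Rightarrow> (int \<times> int) set \<Rightarrow> bool" where
  "minimally_closed N S \<longleftrightarrow> closed_bc N S \<and> S \<noteq> {} \<and>
     (\<forall>S'. S' \<subseteq> S \<and> S' \<noteq> {} \<and> closed_bc N S' \<longrightarrow> S' = S)"

end

theory Submission
  imports Defs
begin

lemma kill_first:
  fixes g h :: int
  shows "\<exists>V\<in>SL2. fst (act N (g,h) V) = 0"
proof (cases "g = 0 \<and> h = 0")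
  case True
  then show ?thesis by (intro bexI[of _ "(1,0,0,1)"]) (auto simp: SL2_def)
next
  case False
  define k where "k = gcd h g"
  define a where "a = h div k"
  define c where "c = g div k"
  have cop: "coprime a c" unfolding a_def c_def k_def
    using div_gcd_coprime[of h g] False by auto
  then have "gcd a c = 1" by simp
  then obtain u v where uv: "u * a + v * c = 1" using bezout_int[of a c] by metis
  have hk: "h = a * k" unfolding a_def k_def by simp
  have gk: "g = c * k" unfolding c_def k_def by simp
  have "a * g - c * h = 0" using hk gk by (simp add: algebra_simps)
  moreover have "(a, -v, c, u) \<in> SL2" using uv by (simp add: SL2_def algebra_simps)
  ultimately show ?thesis by (intro bexI[of _ "(a,-v,c,u)"]) auto
qed

theorem lemma2p10:
  fixes N \<theta> :: int and S :: "(int \<times> int) set"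
  assumes "N > 0"
    and "\<theta> \<in> P N" and "coprime \<theta> N"
    and "minimally_closed N S"
  shows "\<forall>x\<in>S. \<exists>m::int. \<exists>V\<in>SL2.
           act N x V = (0, (m * \<theta>) mod N) \<and> (0, (m * \<theta>) mod N) \<in> S"
proof
  fix x assume xS: "x \<in> S"
  obtain g h where x: "x = (g,h)" by (cases x)
  obtain V where V: "V \<in> SL2" "fst (act N (g,h) V) = 0" using kill_first by blast
  obtain a b c d where Vd: "V = (a,b,c,d)" by (cases V) auto
  define y where "y = (d*h - b*g) mod N"
  have act: "act N x V = (0, y)" using V(2) by (simp add: x Vd y_def)
  have "gcd \<theta> N = 1" using assms(3) by simp
  then obtain u v where uv: "u * \<theta> + v * N = 1" using bezout_int[of \<theta> N] by metis
  have "(y*u) * \<theta> = y + (- y*v) * N"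
  proof -
    have "(y*u) * \<theta> = y * (u * \<theta> + v * N) - (y*v) * N" by (simp add: algebra_simps)
    then show ?thesis using uv by simp
  qed
  then have "((y*u) * \<theta>) mod N = y mod N" by (simp only: mod_mult_self1)
  also have "\<dots> = y" unfolding y_def by simp
  finally have m: "((y*u) * \<theta>) mod N = y" .
  have "act N x V \<in> S" using assms(4) xS V(1) unfolding minimally_closed_def closed_bc_def by blast
  then show "\<exists>m::int. \<exists>V\<in>SL2. act N x V = (0, (m * \<theta>) mod N) \<and> (0, (m * \<theta>) mod N) \<in> S"
    using act m V(1) by (intro exI[of _ "y*u"] bexI[of _ V]) auto
qed

end
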